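(* Let $\mathbf G$ and $\mathbf H$ be power-associative loops. Then $\mathcal G(\mathbf G)\cong\mathcal G(\mathbf H)$ if and only if $\mathcal G^{\pm}(\mathbf G)\cong\mathcal G^{\pm}(\mathbf H)$.
   Context: A loop is power-associative if every subloop generated by one element is a group; powers $x^n$ are computed in $\langle x\rangle$. The power graph $\mathcal G(\mathbf G)$ has vertex set $G$, distinct $x,y$ adjacent iff $y=x^n$ or $x=y^n$ for some $n\in\mathbb Z$. The $Z^\pm$-power graph $\mathcal G^{\pm}(\mathbf G)$ has vertex set $G$, distinct $x,y$ adjacent iff $y=x^n$ or $x=y^n$ for some $n\in\mathbb Z\setminus\{0\}$. Isomorphism means isomorphism of simple graphs. *)

theory Defs
  imports "HOL-Algebra.Group"
begin

definition loop :: "('a, 'b) monoid_scheme \<Rightarrow> bool" where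
  "loop G \<longleftrightarrow>
     \<one>\<^bsub>G\<^esub> \<in> carrier G \<and>
     (\<forall>a\<in>carrier G. \<forall>b\<in>carrier G. a \<otimes>\<^bsub>G\<^esub> b \<in> carrier G) \<and>
     (\<forall>a\<in>carrier G. \<one>\<^bsub>G\<^esub> \<otimes>\<^bsub>G\<^esub> a = a \<and> a \<otimes>\<^bsub>G\<^esub> \<one>\<^bsub>G\<^esub> = a) \<and>
     (\<forall>a\<in>carrier G. \<forall>b\<in>carrier G. \<exists>!x. x \<in> carrier G \<and> a \<otimes>\<^bsub>G\<^esub> x = b) \<and>
     (\<forall>a\<in>carrier G. \<forall>b\<in>carrier G. \<exists>!y. y \<in> carrier G \<and> y \<otimes>\<^bsub>G\<^esub> a = b)"

definition subloop :: "('a, 'b) monoid_scheme \<Rightarrow> 'a set \<Rightarrow> bool" where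
  "subloop G S \<longleftrightarrow>
     S \<subseteq> carrier G \<and> \<one>\<^bsub>G\<^esub> \<in> S \<and>
     (\<forall>a\<in>S. \<forall>b\<in>S. a \<otimes>\<^bsub>G\<^esub> b \<in> S) \<and>
     (\<forall>a\<in>S. \<forall>b\<in>S. \<forall>x\<in>carrier G. a \<otimes>\<^bsub>G\<^esub> x = b \<longrightarrow> x \<in> S) \<and>
     (\<forall>a\<in>S. \<forall>b\<in>S. \<forall>y\<in>carrier G. y \<otimes>\<^bsub>G\<^esub> a = b \<longrightarrow> y \<in> S)"

definition loop_gen :: "('a, 'b) monoid_scheme \<Rightarrow> 'a \<Rightarrow> 'a set" where
  "loop_gen G x = \<Inter>{S. subloop G S \<and> x \<in> S}"

definition power_assoc_loop :: "('a, 'b) monoid_scheme \<Rightarrow> bool" where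
  "power_assoc_loop G \<longleftrightarrow> loop G \<and>
     (\<forall>x\<in>carrier G. group (G\<lparr>carrier := loop_gen G x\<rparr>))"

definition lpow :: "('a, 'b) monoid_scheme \<Rightarrow> 'a \<Rightarrow> int \<Rightarrow> 'a" where
  "lpow G x n = x [^]\<^bsub>G\<lparr>carrier := loop_gen G x\<rparr>\<^esub> n"

definition power_adj :: "('a, 'b) monoid_scheme \<Rightarrow> 'a \<Rightarrow> 'a \<Rightarrow> bool" where
  "power_adj G x y \<longleftrightarrow> x \<noteq> y \<and>
     ((\<exists>n::int. y = lpow G x n) \<or> (\<exists>n::int. x = lpow G y n))"

definition power_adj_pm :: "('a, 'b) monoid_scheme \<Rightarrow> 'a \<Rightarrow> 'a \<Rightarrow> bool" where
  "power_adj_pm G x y \<longleftrightarrow> x \<noteq> y \<and>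
     ((\<exists>n::int. n \<noteq> 0 \<and> y = lpow G x n) \<or> (\<exists>n::int. n \<noteq> 0 \<and> x = lpow G y n))"

definition graph_iso :: "'a set \<Rightarrow> ('a \<Rightarrow> 'a \<Rightarrow> bool) \<Rightarrow> 'b set \<Rightarrow> ('b \<Rightarrow> 'b \<Rightarrow> bool) \<Rightarrow> bool" where
  "graph_iso V E W F \<longleftrightarrow> (\<exists>f. bij_betw f V W \<and>
     (\<forall>x\<in>V. \<forall>y\<in>V. E x y \<longleftrightarrow> F (f x) (f y)))"

end

theory Submission
  imports Defs "HOL-Algebra.Multiplicative_Group"
begin

lemma subloopD:
  assumes "subloop G S"
  shows "S \<subseteq> carrier G" "\<one>\<^bsub>G\<^esub> \<in> S" "a \<in> S \<Longrightarrow> b \<in> S \<Longrightarrow> a \<otimes>\<^bsub>G\<^esub> b \<in> S"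
    "a \<in> S \<Longrightarrow> b \<in> S \<Longrightarrow> x \<in> carrier G \<Longrightarrow> a \<otimes>\<^bsub>G\<^esub> x = b \<Longrightarrow> x \<in> S"
    "a \<in> S \<Longrightarrow> b \<in> S \<Longrightarrow> x \<in> carrier G \<Longrightarrow> x \<otimes>\<^bsub>G\<^esub> a = b \<Longrightarrow> x \<in> S"
  using assms unfolding subloop_def by blast+

lemma subloopI:
  assumes "S \<subseteq> carrier G" "\<one>\<^bsub>G\<^esub> \<in> S" "\<And>a b. a \<in> S \<Longrightarrow> b \<in> S \<Longrightarrow> a \<otimes>\<^bsub>G\<^esub> b \<in> S"
    "\<And>a b x. a \<in> S \<Longrightarrow> b \<in> S \<Longrightarrow> x \<in> carrier G \<Longrightarrow> a \<otimes>\<^bsub>G\<^esub> x = b \<Longrightarrow> x \<in> S"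
    "\<And>a b x. a \<in> S \<Longrightarrow> b \<in> S \<Longrightarrow> x \<in> carrier G \<Longrightarrow> x \<otimes>\<^bsub>G\<^esub> a = b \<Longrightarrow> x \<in> S"
  shows "subloop G S"
  using assms unfolding subloop_def by blast

lemma subloop_carrier: "loop G \<Longrightarrow> subloop G (carrier G)"
  unfolding loop_def subloop_def by auto

lemma subloop_Inter:
  assumes A: "\<And>S. S \<in> F \<Longrightarrow> subloop G S" and "F \<noteq> {}"
  shows "subloop G (\<Inter>F)"
proof (rule subloopI)
  show "\<Inter>F \<subseteq> carrier G" using assms subloopD(1) by blast
  show "\<one>\<^bsub>G\<^esub> \<in> \<Inter>F" using A subloopD(2) by blast
  show "a \<otimes>\<^bsub>G\<^esub> b \<in> \<Inter>F" if "a \<in> \<Inter>F" "b \<in> \<Inter>F" for a b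
    using A subloopD(3) that by (meson InterD InterI)
  show "x \<in> \<Inter>F" if "a \<in> \<Inter>F" "b \<in> \<Inter>F" "x \<in> carrier G" "a \<otimes>\<^bsub>G\<^esub> x = b" for a b x
    using A subloopD(4) that by (meson InterD InterI)
  show "x \<in> \<Inter>F" if "a \<in> \<Inter>F" "b \<in> \<Inter>F" "x \<in> carrier G" "x \<otimes>\<^bsub>G\<^esub> a = b" for a b x
    using A subloopD(5) that by (meson InterD InterI)
qed
locale pal =
  fixes G :: "('a, 'b) monoid_scheme" (structure)
  assumes pal: "power_assoc_loop G"
begin

lemma lp: "loop G" using pal unfolding power_assoc_loop_def by auto

lemma one_c[simp]: "\<one> \<in> carrier G" using lp unfolding loop_def by auto
lemma m_c[simp]: "a \<in> carrier G \<Longrightarrow> b \<in> carrier G \<Longrightarrow> a \<otimes> b \<in> carrier G" using lp unfolding loop_def by auto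

lemma gen_sub: "x \<in> carrier G \<Longrightarrow> subloop G (loop_gen G x)"
  unfolding loop_gen_def using subloop_carrier[OF lp]
  by (intro subloop_Inter) blast+

lemma gen_in: "x \<in> carrier G \<Longrightarrow> x \<in> loop_gen G x"
  unfolding loop_gen_def by auto

lemma gen_subset: "x \<in> carrier G \<Longrightarrow> loop_gen G x \<subseteq> carrier G"
  using gen_sub unfolding subloop_def by auto

lemma gen_mono: "x \<in> carrier G \<Longrightarrow> y \<in> loop_gen G x \<Longrightarrow> loop_gen G y \<subseteq> loop_gen G x"
  using gen_sub unfolding loop_gen_def by blast

abbreviation K where "K x \<equiv> G\<lparr>carrier := loop_gen G x\<rparr>"

lemma K_group: "x \<in> carrier G \<Longrightarrow> group (K x)"
  using pal unfolding power_assoc_loop_def by auto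

lemma K_subgroup:
  assumes x: "x \<in> carrier G" and y: "y \<in> loop_gen G x"
  shows "subgroup (loop_gen G y) (K x)"
proof -
  interpret g: group "K x" using K_group x by auto
  have yc: "y \<in> carrier G" using y gen_subset x by auto
  have sub: "loop_gen G y \<subseteq> loop_gen G x" using gen_mono x y by auto
  have sl: "subloop G (loop_gen G y)" using gen_sub yc .
  show ?thesis
  proof (rule subgroup.intro)
    show "loop_gen G y \<subseteq> carrier (K x)" using sub by simp
    show "a \<otimes>\<^bsub>K x\<^esub> b \<in> loop_gen G y" if "a \<in> loop_gen G y" "b \<in> loop_gen G y" for a b
      using subloopD(3)[OF sl that] by simp
    show "\<one>\<^bsub>K x\<^esub> \<in> loop_gen G y" using subloopD(2)[OF sl] by simp
    show "inv\<^bsub>K x\<^esub> a \<in> loop_gen G y" if a: "a \<in> loop_gen G y" for a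
    proof -
      have aK: "a \<in> carrier (K x)" using a sub by auto
      have "a \<otimes>\<^bsub>K x\<^esub> inv\<^bsub>K x\<^esub> a = \<one>\<^bsub>K x\<^esub>" using g.r_inv aK by blast
      hence "a \<otimes> inv\<^bsub>K x\<^esub> a = \<one>" by simp
      moreover have "inv\<^bsub>K x\<^esub> a \<in> carrier G" using g.inv_closed[OF aK] gen_subset x by auto
      ultimately show ?thesis using subloopD(4)[OF sl a subloopD(2)[OF sl]] by blast
    qed
  qed
qed

lemma lpow_K:
  assumes x: "x \<in> carrier G" and y: "y \<in> loop_gen G x"
  shows "lpow G y n = y [^]\<^bsub>K x\<^esub> n"
proof -
  interpret g: group "K x" using K_group x by auto
  have "y [^]\<^bsub>K x\<^esub> n = y [^]\<^bsub>(K x)\<lparr>carrier := loop_gen G y\<rparr>\<^esub> n"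
    by (rule g.int_pow_consistent[OF K_subgroup[OF x y]]) (use gen_in gen_subset x y in auto)
  thus ?thesis unfolding lpow_def by simp
qed

lemma lpow_in: "x \<in> carrier G \<Longrightarrow> lpow G x n \<in> loop_gen G x"
proof -
  assume x: "x \<in> carrier G"
  interpret g: group "K x" using K_group x by auto
  have "x \<in> carrier (K x)" using gen_in x by simp
  hence "x [^]\<^bsub>K x\<^esub> n \<in> carrier (K x)" by (rule g.int_pow_closed)
  thus ?thesis unfolding lpow_def by simp
qed

lemma lpow_c[simp]: "x \<in> carrier G \<Longrightarrow> lpow G x n \<in> carrier G"
  using lpow_in gen_subset by blast

lemma lpow_lpow: "x \<in> carrier G \<Longrightarrow> lpow G (lpow G x n) m = lpow G x (n * m)"
proof -
  assume x: "x \<in> carrier G"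
  interpret g: group "K x" using K_group x by auto
  have xK: "x \<in> carrier (K x)" using gen_in x by simp
  have "lpow G (lpow G x n) m = (lpow G x n) [^]\<^bsub>K x\<^esub> m" using lpow_K[OF x lpow_in[OF x]] .
  also have "\<dots> = x [^]\<^bsub>K x\<^esub> (n*m)" unfolding lpow_def using g.int_pow_pow[OF xK] by simp
  finally show ?thesis unfolding lpow_def .
qed

lemma lpow_0[simp]: "lpow G x 0 = \<one>" unfolding lpow_def by simp

lemma lpow_1[simp]: "x \<in> carrier G \<Longrightarrow> lpow G x 1 = x"
  unfolding lpow_def using group.int_pow_1[OF K_group, of x] gen_in by simp

lemma lpow_one[simp]: "lpow G \<one> n = \<one>"
proof -
  have "lpow G \<one> n = lpow G (lpow G \<one> 0) n" by simp
  also have "\<dots> = \<one>" by (subst lpow_lpow) auto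
  finally show ?thesis .
qed

end

lemma arith1: "\<bar>n::int\<bar> \<ge> 2 \<Longrightarrow> \<bar>n\<bar> + 1 \<noteq> n * k"
proof
  assume a: "\<bar>n\<bar> \<ge> 2" "\<bar>n\<bar> + 1 = n * k"
  hence "\<bar>n * k\<bar> = \<bar>n\<bar> + 1" by (metis abs_of_nonneg add_nonneg_nonneg abs_ge_zero zero_le_one)
  hence e: "\<bar>n\<bar> * \<bar>k\<bar> = \<bar>n\<bar> + 1" by (simp add: abs_mult)
  have "k \<noteq> 0" using a by auto
  hence "\<bar>k\<bar> = 1 \<or> \<bar>k\<bar> \<ge> 2" by linarith
  thus False
  proof
    assume "\<bar>k\<bar> = 1" thus False using e by simp
  next
    assume "\<bar>k\<bar> \<ge> 2"
    hence "\<bar>n\<bar> * \<bar>k\<bar> \<ge> \<bar>n\<bar> * 2" by (intro mult_left_mono) auto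
    thus False using e a by linarith
  qed
qed

lemma arith2: "\<bar>n::int\<bar> \<ge> 2 \<Longrightarrow> n \<noteq> (\<bar>n\<bar> + 1) * k"
proof
  assume a: "\<bar>n\<bar> \<ge> 2" "n = (\<bar>n\<bar> + 1) * k"
  hence "\<bar>n\<bar> = \<bar>(\<bar>n\<bar> + 1) * k\<bar>" by simp
  hence e: "\<bar>n\<bar> = (\<bar>n\<bar> + 1) * \<bar>k\<bar>" by (simp add: abs_mult)
  have "k \<noteq> 0" using a by auto
  hence "\<bar>k\<bar> \<ge> 1" by linarith
  hence "(\<bar>n\<bar> + 1) * \<bar>k\<bar> \<ge> (\<bar>n\<bar> + 1) * 1" by (intro mult_left_mono) auto
  hence "(\<bar>n\<bar> + 1) * \<bar>k\<bar> \<ge> \<bar>n\<bar> + 1" by simp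
  thus False using e by linarith
qed

context pal begin

definition tor where "tor x \<longleftrightarrow> (\<exists>n. n \<noteq> 0 \<and> lpow G x n = \<one>)"

abbreviation F where "F \<equiv> power_adj_pm G"

lemma lpow_comm: "x \<in> carrier G \<Longrightarrow> lpow G (lpow G x n) m = lpow G (lpow G x m) n"
  by (simp add: lpow_lpow mult.commute)

lemma tor_one: "tor \<one>" unfolding tor_def by (rule exI[of _ 1]) simp

lemma tor_pow: "x \<in> carrier G \<Longrightarrow> tor x \<Longrightarrow> tor (lpow G x n)"
proof -
  assume x: "x \<in> carrier G" and "tor x"
  then obtain k where k: "k \<noteq> 0" "lpow G x k = \<one>" unfolding tor_def by auto
  have "lpow G (lpow G x n) k = lpow G (lpow G x k) n" using lpow_comm[OF x] .
  also have "\<dots> = \<one>" using k by simp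
  finally show ?thesis using k unfolding tor_def by auto
qed

lemma tor_root: "x \<in> carrier G \<Longrightarrow> n \<noteq> 0 \<Longrightarrow> tor (lpow G x n) \<Longrightarrow> tor x"
proof -
  assume x: "x \<in> carrier G" and n: "n \<noteq> 0" and "tor (lpow G x n)"
  then obtain k where k: "k \<noteq> 0" "lpow G (lpow G x n) k = \<one>" unfolding tor_def by auto
  hence "lpow G x (n*k) = \<one>" using lpow_lpow[OF x] by simp
  thus ?thesis using k n unfolding tor_def by (intro exI[of _ "n*k"]) simp
qed

lemma lpow_eq_ntor:
  assumes x: "x \<in> carrier G" and nt: "\<not> tor x" and e: "lpow G x n = lpow G x m"
  shows "n = m"
proof -
  interpret g: group "K x" using K_group x by auto
  have xK: "x \<in> carrier (K x)" using gen_in x by simp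
  have "g.ord x = 0"
  proof (rule ccontr)
    assume "g.ord x \<noteq> 0"
    hence "lpow G x (int (g.ord x)) = \<one>" unfolding lpow_def using g.pow_ord_eq_1[OF xK]
      by (simp add: int_pow_int)
    hence "tor x" using \<open>g.ord x \<noteq> 0\<close> unfolding tor_def by (intro exI[of _ "int (g.ord x)"]) simp
    thus False using nt by simp
  qed
  have "x [^]\<^bsub>K x\<^esub> n = x [^]\<^bsub>K x\<^esub> m" using e unfolding lpow_def .
  hence "int (g.ord x) dvd (m - n)" using g.int_pow_eq[OF xK, of n m] by blast
  thus ?thesis using \<open>g.ord x = 0\<close> by simp
qed

lemma adj_tor:
  assumes x: "x \<in> carrier G" and y: "y \<in> carrier G" and a: "F x y" and t: "tor x" shows "tor y"
proof -
  from a obtain n where n: "n \<noteq> 0" "y = lpow G x n \<or> x = lpow G y n" unfolding power_adj_pm_def by auto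
  from n(2) show ?thesis
  proof
    assume "y = lpow G x n" thus ?thesis using tor_pow[OF x t] by simp
  next
    assume "x = lpow G y n" thus ?thesis using tor_root[OF y n(1)] t by simp
  qed
qed

lemma adj_sym: "F x y = F y x" unfolding power_adj_pm_def by auto

lemma ntor_ne_one: "\<not> tor x \<Longrightarrow> x \<noteq> \<one>" using tor_one by auto

lemma ntor_pow: "x \<in> carrier G \<Longrightarrow> \<not> tor x \<Longrightarrow> n \<noteq> 0 \<Longrightarrow> \<not> tor (lpow G x n)"
  using tor_root by blast

lemma ntor_adj_pow: "x \<in> carrier G \<Longrightarrow> \<not> tor x \<Longrightarrow> n \<noteq> 0 \<Longrightarrow> n \<noteq> 1 \<Longrightarrow> F x (lpow G x n)"
  unfolding power_adj_pm_def using lpow_eq_ntor[of x n 1] by auto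

definition tw where "tw S x y \<longleftrightarrow> x \<in> S \<and> y \<in> S \<and> (\<forall>w\<in>S. (w = x \<or> F x w) \<longleftrightarrow> (w = y \<or> F y w))"

definition TW where "TW S z \<longleftrightarrow> (\<forall>v w. tw S z v \<longrightarrow> tw S z w \<longrightarrow> v = z \<or> w = z \<or> v = w)"

lemma mutual_tw1:
  assumes S: "S \<subseteq> carrier G" and xS: "x \<in> S" and yS: "y \<in> S"
    and x1: "x \<noteq> \<one>" and y1: "y \<noteq> \<one>"
    and xy: "x = lpow G y i" and yx: "y = lpow G x j" and wc: "w \<in> carrier G" and w: "w = x \<or> F x w"
  shows "w = y \<or> F y w"
proof -
  have xc: "x \<in> carrier G" and yc: "y \<in> carrier G" using S xS yS by auto
  have i0: "i \<noteq> 0" using xy x1 by auto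
  have j0: "j \<noteq> 0" using yx y1 by auto
  show ?thesis
  proof (cases "w = y")
    case True thus ?thesis by simp
  next
    case wy: False
    from w show ?thesis
    proof
      assume "w = x" thus ?thesis using wy xy i0 unfolding power_adj_pm_def by auto
    next
      assume "F x w"
      then obtain k where "k \<noteq> 0" "w = lpow G x k \<or> x = lpow G w k"
        unfolding power_adj_pm_def by auto
      thus ?thesis
      proof (elim disjE)
        assume "w = lpow G x k"
        hence "w = lpow G y (i*k)" using xy lpow_lpow yc by simp
        moreover have "i*k \<noteq> 0" using \<open>k \<noteq> 0\<close> i0 by simp
        ultimately show ?thesis using wy unfolding power_adj_pm_def by blast
      next
        assume "x = lpow G w k"
        hence "y = lpow G w (k*j)" using yx lpow_lpow wc by simp
        moreover have "k*j \<noteq> 0" using \<open>k \<noteq> 0\<close> j0 by simp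
        ultimately show ?thesis using wy unfolding power_adj_pm_def by blast
      qed
    qed
  qed
qed

lemma mutual_tw:
  assumes S: "S \<subseteq> carrier G" and xS: "x \<in> S" and yS: "y \<in> S"
    and x1: "x \<noteq> \<one>" and y1: "y \<noteq> \<one>"
    and xy: "x = lpow G y i" and yx: "y = lpow G x j"
  shows "tw S x y"
  unfolding tw_def using mutual_tw1[OF S xS yS x1 y1 xy yx] mutual_tw1[OF S yS xS y1 x1 yx xy]
    xS yS S by blast

end

lemma odd_dvd4: "odd (g::int) \<Longrightarrow> g dvd 4 \<Longrightarrow> g \<ge> 0 \<Longrightarrow> g = 1"
proof -
  assume a: "odd g" "g dvd 4" "g \<ge> 0"
  have "g \<le> 4" using a(2) by (rule zdvd_imp_le) simp
  hence "g = 0 \<or> g = 1 \<or> g = 2 \<or> g = 3 \<or> g = 4" using a(3) by linarith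
  thus ?thesis using a by auto
qed

lemma inv_of_gcd: fixes k n :: int assumes "gcd k n = 1" shows "\<exists>s. n dvd k * s - 1"
proof -
  obtain u v where "u * k + v * n = gcd k n" using bezout_int by blast
  hence "k * u - 1 = n * (- v)" using assms by (simp add: algebra_simps)
  thus ?thesis by (metis dvdI)
qed

lemma third_gen:
  fixes n :: int assumes n: "n \<ge> 8"
  shows "\<exists>k s. n dvd k * s - 1 \<and> \<not> n dvd (k - 1) \<and> \<not> n dvd (k + 1)"
proof (cases "odd n")
  case True
  then obtain m where m: "n = 2*m + 1" by (metis oddE)
  have "n dvd 2 * (m+1) - 1" using m by (simp add: algebra_simps)
  moreover have "\<not> n dvd (2 - 1)" using n by (simp add: zdvd_not_zless)
  moreover have "\<not> n dvd (2 + 1)" using n by (intro zdvd_not_zless) auto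
  ultimately show ?thesis by blast
next
  case False
  then obtain m where m: "n = 2*m" by blast
  show ?thesis
  proof (cases "even m")
    case True
    then obtain t where t: "m = 2*t" by blast
    have "(2*t - 1) * (2*t - 1) - 1 = n * (t - 1)" using m t by (simp add: algebra_simps)
    hence "n dvd (2*t - 1) * (2*t - 1) - 1" by (metis dvdI)
    moreover have "\<not> n dvd (2*t - 1 - 1)" using n m t by (intro zdvd_not_zless) auto
    moreover have "\<not> n dvd (2*t - 1 + 1)" using n m t by (intro zdvd_not_zless) auto
    ultimately show ?thesis by blast
  next
    case False
    then obtain t where t: "m = 2*t + 1" by (metis oddE)
    have "gcd (2*t - 1) n = 1"
    proof (rule odd_dvd4)
      have "gcd (2*t - 1) n dvd n - 2 * (2*t - 1)" by (rule dvd_diff[OF gcd_dvd2 dvd_mult[OF gcd_dvd1]])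
      also have "n - 2 * (2*t - 1) = 4" using m t by simp
      finally show "gcd (2*t - 1) n dvd 4" .
      show "odd (gcd (2*t - 1) n)"
      proof
        assume "even (gcd (2*t - 1) n)"
        hence "even (2*t - 1)" using dvd_trans gcd_dvd1 by blast
        thus False by simp
      qed
    qed simp
    hence "\<exists>s. n dvd (2*t - 1) * s - 1" by (rule inv_of_gcd)
    then obtain s where "n dvd (2*t - 1) * s - 1" ..
    moreover have "\<not> n dvd (2*t - 1 - 1)" using n m t by (intro zdvd_not_zless) auto
    moreover have "\<not> n dvd (2*t - 1 + 1)" using n m t by (intro zdvd_not_zless) auto
    ultimately show ?thesis by blast
  qed
qed



lemma dvd_ne_2le: "(a::nat) dvd b \<Longrightarrow> a \<noteq> b \<Longrightarrow> b \<noteq> 0 \<Longrightarrow> 2 * a \<le> b"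
proof -
  assume a: "a dvd b" "a \<noteq> b" "b \<noteq> 0"
  then obtain c where c: "b = a * c" by blast
  have "c \<noteq> 0" "c \<noteq> 1" using a c by auto
  hence "c \<ge> 2" by linarith
  hence "a * 2 \<le> a * c" by simp
  thus ?thesis using c by simp
qed

lemma (in group) ord_pow_dvd:
  assumes w: "w \<in> carrier G" shows "ord (w [^] (q::int)) dvd ord w"
proof -
  have wq: "w [^] q \<in> carrier G" using w by simp
  have "(w [^] q) [^] int (ord w) = w [^] (q * int (ord w))" using int_pow_pow[OF w] .
  also have "\<dots> = \<one>" using int_pow_eq_id[OF w] by simp
  finally have "int (ord (w [^] q)) dvd int (ord w)" using int_pow_eq_id[OF wq] by simp
  thus ?thesis by simp
qed

lemma (in group) gen_same_ord:
  assumes w: "w \<in> carrier G" and o: "ord (w [^] (q::int)) = ord w" and n0: "ord w \<noteq> 0"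
  shows "\<exists>s::int. (w [^] q) [^] s = w"
proof -
  define n where "n = ord w"
  define r where "r = q mod int n"
  have r0: "r \<ge> 0" using n0 unfolding r_def n_def by simp
  have "int n dvd q - r" unfolding r_def by (simp add: dvd_minus_mod)
  hence "int n dvd r - q" by (metis dvd_minus_iff minus_diff_eq)
  hence wqr: "w [^] q = w [^] r" using int_pow_eq[OF w, of q r] unfolding n_def by simp
  have wr: "w [^] r = w [^] (nat r)" using r0 by (metis int_nat_eq int_pow_int)
  show ?thesis
  proof (cases "nat r = 0")
    case True
    hence "w [^] q = \<one>" using wqr wr by simp
    hence "ord w = 1" using o by simp
    hence "w = \<one>" using ord_eq_1[OF w] by simp
    thus ?thesis by (intro exI[of _ 0]) simp
  next
    case False
    have "ord (w [^] (nat r)) = n div gcd n (nat r)" using ord_pow_gen[OF w, of "nat r"] False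
      unfolding n_def by simp
    hence "n div gcd n (nat r) = n" using o wqr wr unfolding n_def by simp
    hence g1: "gcd n (nat r) = 1" using n0 unfolding n_def by (simp add: div_eq_dividend_iff)
    have "gcd r (int n) = 1"
    proof -
      have "gcd r (int n) = gcd (int (nat r)) (int n)" using r0 by simp
      also have "\<dots> = int (gcd (nat r) n)" by (rule gcd_int_int_eq)
      finally show ?thesis using g1 by (simp add: gcd.commute)
    qed
    hence "\<exists>s. int n dvd r * s - 1" by (rule inv_of_gcd)
    then obtain s where s: "int n dvd r * s - 1" ..
    have "int n dvd (q - r) * s" using \<open>int n dvd q - r\<close> by simp
    hence "int n dvd (q - r) * s + (r * s - 1)" using s by (rule dvd_add)
    hence "int n dvd q * s - 1" by (simp add: algebra_simps)
    hence "int n dvd 1 - q * s" by (metis dvd_minus_iff minus_diff_eq)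
    hence "w [^] (q * s) = w [^] (1::int)" using int_pow_eq[OF w, of "q*s" 1] unfolding n_def by simp
    hence "(w [^] q) [^] s = w" using int_pow_pow[OF w] w by simp
    thus ?thesis ..
  qed
qed

context pal begin

lemma ntor_tw:
  assumes S: "S \<subseteq> carrier G" and IS: "\<And>x. x \<in> carrier G \<Longrightarrow> \<not> tor x \<Longrightarrow> x \<in> S"
    and z: "z \<in> carrier G" and nz: "\<not> tor z" and t: "tw S z w"
  shows "w = z \<or> w = lpow G z (-1)"
proof -
  have zS: "z \<in> S" and wS: "w \<in> S" using t unfolding tw_def by auto
  have wc: "w \<in> carrier G" using wS S by auto
  have tw': "\<And>v. v \<in> S \<Longrightarrow> (v = z \<or> F z v) \<longleftrightarrow> (v = w \<or> F w v)" using t unfolding tw_def by blast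
  have "z = w \<or> F w z" using tw'[OF zS] by simp
  thus ?thesis
  proof
    assume "z = w" thus ?thesis by simp
  next
    assume Fwz: "F w z"
    then obtain n where n0: "n \<noteq> 0" and nn: "z = lpow G w n \<or> w = lpow G z n"
      unfolding power_adj_pm_def by auto
    from nn show ?thesis
    proof
      assume wz: "w = lpow G z n"
      show ?thesis
      proof (cases "n = 1 \<or> n = -1")
        case True thus ?thesis using wz z by auto
      next
        case False
        hence n2: "\<bar>n\<bar> \<ge> 2" using n0 by linarith
        define m where "m = \<bar>n\<bar> + 1"
        define v where "v = lpow G z m"
        have m0: "m \<noteq> 0" "m \<noteq> 1" using n2 unfolding m_def by auto
        have vnt: "\<not> tor v" unfolding v_def using ntor_pow[OF z nz m0(1)] .
        have vc: "v \<in> carrier G" unfolding v_def using z by simp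
        have vS: "v \<in> S" using IS[OF vc vnt] .
        have "F z v" unfolding v_def using ntor_adj_pow[OF z nz m0] .
        hence "v = w \<or> F w v" using tw'[OF vS] by simp
        thus ?thesis
        proof
          assume "v = w"
          hence "m = n" using lpow_eq_ntor[OF z nz] wz unfolding v_def by simp
          thus ?thesis using n2 unfolding m_def by simp
        next
          assume "F w v"
          then obtain k where "v = lpow G w k \<or> w = lpow G v k" unfolding power_adj_pm_def by auto
          thus ?thesis
          proof
            assume "v = lpow G w k"
            hence "lpow G z m = lpow G z (n*k)" using wz lpow_lpow[OF z] unfolding v_def by simp
            hence "m = n * k" using lpow_eq_ntor[OF z nz] by blast
            thus ?thesis using arith1[OF n2] unfolding m_def by simp
          next
            assume "w = lpow G v k"
            hence "lpow G z n = lpow G z (m*k)" using wz lpow_lpow[OF z] unfolding v_def by simp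
            hence "n = m * k" using lpow_eq_ntor[OF z nz] by blast
            thus ?thesis using arith2[OF n2] unfolding m_def by simp
          qed
        qed
      qed
    next
      assume zw: "z = lpow G w n"
      have nw: "\<not> tor w" using tor_pow[OF wc, of n] nz zw by auto
      show ?thesis
      proof (cases "n = 1 \<or> n = -1")
        case True
        thus ?thesis
        proof
          assume "n = 1" thus ?thesis using zw wc by simp
        next
          assume "n = -1"
          hence "lpow G z (-1) = lpow G w ((-1)*(-1))" using zw lpow_lpow[OF wc] by simp
          thus ?thesis using wc by simp
        qed
      next
        case False
        hence n2: "\<bar>n\<bar> \<ge> 2" using n0 by linarith
        define m where "m = \<bar>n\<bar> + 1"
        define v where "v = lpow G w m"
        have m0: "m \<noteq> 0" "m \<noteq> 1" using n2 unfolding m_def by auto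
        have vnt: "\<not> tor v" unfolding v_def using ntor_pow[OF wc nw m0(1)] .
        have vc: "v \<in> carrier G" unfolding v_def using wc by simp
        have vS: "v \<in> S" using IS[OF vc vnt] .
        have "F w v" unfolding v_def using ntor_adj_pow[OF wc nw m0] .
        hence "v = z \<or> F z v" using tw'[OF vS] by simp
        thus ?thesis
        proof
          assume "v = z"
          hence "m = n" using lpow_eq_ntor[OF wc nw] zw unfolding v_def by simp
          thus ?thesis using n2 unfolding m_def by simp
        next
          assume "F z v"
          then obtain k where "v = lpow G z k \<or> z = lpow G v k" unfolding power_adj_pm_def by auto
          thus ?thesis
          proof
            assume "v = lpow G z k"
            hence "lpow G w m = lpow G w (n*k)" using zw lpow_lpow[OF wc] unfolding v_def by simp
            hence "m = n * k" using lpow_eq_ntor[OF wc nw] by blast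
            thus ?thesis using arith1[OF n2] unfolding m_def by simp
          next
            assume "z = lpow G v k"
            hence "lpow G w n = lpow G w (m*k)" using zw lpow_lpow[OF wc] unfolding v_def by simp
            hence "n = m * k" using lpow_eq_ntor[OF wc nw] by blast
            thus ?thesis using arith2[OF n2] unfolding m_def by simp
          qed
        qed
      qed
    qed
  qed
qed

lemma ntor_TW:
  assumes S: "S \<subseteq> carrier G" and IS: "\<And>x. x \<in> carrier G \<Longrightarrow> \<not> tor x \<Longrightarrow> x \<in> S"
    and z: "z \<in> carrier G" and nz: "\<not> tor z"
  shows "TW S z"
  unfolding TW_def using ntor_tw[OF S IS z nz] by blast

end

context pal begin

lemma lpow_eq_iff:
  assumes z: "z \<in> carrier G"
  shows "lpow G z a = lpow G z b \<longleftrightarrow> int (group.ord (K z) z) dvd b - a"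
proof -
  interpret g: group "K z" using K_group z by auto
  have zK: "z \<in> carrier (K z)" using gen_in z by simp
  show ?thesis unfolding lpow_def using g.int_pow_eq[OF zK] .
qed

lemma lpow_one_iff:
  assumes z: "z \<in> carrier G"
  shows "lpow G z a = \<one> \<longleftrightarrow> int (group.ord (K z) z) dvd a"
proof -
  interpret g: group "K z" using K_group z by auto
  have zK: "z \<in> carrier (K z)" using gen_in z by simp
  have "lpow G z a = \<one>\<^bsub>K z\<^esub> \<longleftrightarrow> int (g.ord z) dvd a" unfolding lpow_def using g.int_pow_eq_id[OF zK] .
  thus ?thesis by simp
qed

lemma core:
  assumes S: "S \<subseteq> carrier G" and S1: "\<And>u. u \<in> carrier G \<Longrightarrow> u \<noteq> \<one> \<Longrightarrow> u \<in> S"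
    and zS: "z \<in> S" and xc: "x \<in> carrier G" and yc: "y \<in> carrier G"
    and x1: "x \<noteq> \<one>" and z1: "z \<noteq> \<one>" and tz: "tor z"
    and xy: "x = lpow G y p" and yz: "y = lpow G z q"
    and nyx: "\<not> (\<exists>s. y = lpow G x s)" and nzy: "\<not> (\<exists>s. z = lpow G y s)"
    and TWz: "TW S z"
  shows False
proof -
  have z: "z \<in> carrier G" using zS S by auto
  interpret g: group "K z" using K_group z by auto
  have zK: "z \<in> carrier (K z)" using gen_in z by simp
  have yL: "y \<in> loop_gen G z" using yz lpow_in z by simp
  have yK: "y \<in> carrier (K z)" using yL by simp
  have yq: "y = z [^]\<^bsub>K z\<^esub> q" using yz unfolding lpow_def .
  have xp: "x = y [^]\<^bsub>K z\<^esub> p" using xy lpow_K[OF z yL] by simp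
  have xK: "x \<in> carrier (K z)" unfolding xp by (rule g.int_pow_closed[OF yK])
  define n where "n = g.ord z"
  obtain k0 where k0: "k0 \<noteq> 0" "lpow G z k0 = \<one>" using tz unfolding tor_def by auto
  have n0: "n \<noteq> 0" using k0 lpow_one_iff[OF z] unfolding n_def by auto
  have oy: "g.ord y dvd n" unfolding n_def yq by (rule g.ord_pow_dvd[OF zK])
  have oyn: "g.ord y \<noteq> n"
  proof
    assume "g.ord y = n"
    hence "\<exists>s::int. (z [^]\<^bsub>K z\<^esub> q) [^]\<^bsub>K z\<^esub> s = z" using g.gen_same_ord[OF zK, of q] n0 yq unfolding n_def by simp
    then obtain s :: int where "y [^]\<^bsub>K z\<^esub> s = z" using yq by auto
    hence "z = lpow G y s" using lpow_K[OF z yL] by simp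
    thus False using nzy by blast
  qed
  have ox: "g.ord x dvd g.ord y" unfolding xp by (rule g.ord_pow_dvd[OF yK])
  have oy0: "g.ord y \<noteq> 0" using oy n0 by auto
  have oxy: "g.ord x \<noteq> g.ord y"
  proof
    assume "g.ord x = g.ord y"
    hence "\<exists>s::int. (y [^]\<^bsub>K z\<^esub> p) [^]\<^bsub>K z\<^esub> s = y" using g.gen_same_ord[OF yK, of p] oy0 xp by simp
    then obtain s :: int where "x [^]\<^bsub>K z\<^esub> s = y" using xp by auto
    moreover have "x \<in> loop_gen G z" using xK by simp
    ultimately have "y = lpow G x s" using lpow_K[OF z] by simp
    thus False using nyx by blast
  qed
  have ox1: "g.ord x \<noteq> 1" using g.ord_eq_1[OF xK] x1 by simp
  have ox0: "g.ord x \<noteq> 0" using ox oy0 by auto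
  have "2 * g.ord x \<le> g.ord y" using dvd_ne_2le[OF ox oxy oy0] .
  moreover have "2 * g.ord y \<le> n" using dvd_ne_2le[OF oy oyn n0] .
  ultimately have n8: "int n \<ge> 8" using ox1 ox0 by linarith
  obtain k s where ks: "int n dvd k * s - 1" "\<not> int n dvd (k - 1)" "\<not> int n dvd (k + 1)"
    using third_gen[OF n8] by blast
  define g2 where "g2 = lpow G z (-1)"
  define g3 where "g3 = lpow G z k"
  have ndvd1: "\<not> int n dvd 1" using n8 by (intro zdvd_not_zless) auto
  have g2c: "g2 \<in> carrier G" and g3c: "g3 \<in> carrier G" unfolding g2_def g3_def using z by auto
  have g21: "g2 \<noteq> \<one>" unfolding g2_def using lpow_one_iff[OF z] ndvd1 unfolding n_def by simp
  have g31: "g3 \<noteq> \<one>"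
  proof
    assume "g3 = \<one>"
    hence "int n dvd k" unfolding g3_def using lpow_one_iff[OF z] unfolding n_def by simp
    hence "int n dvd k * s" by simp
    hence "int n dvd k * s - (k * s - 1)" using ks(1) by (rule dvd_diff)
    thus False using ndvd1 by simp
  qed
  have g2S: "g2 \<in> S" using S1 g2c g21 by auto
  have g3S: "g3 \<in> S" using S1 g3c g31 by auto
  have "z = lpow G g2 (-1)" unfolding g2_def using lpow_lpow[OF z] z by simp
  hence tw2: "tw S z g2" using mutual_tw[OF S zS g2S z1 g21] unfolding g2_def by blast
  have "lpow G g3 s = lpow G z (k*s)" unfolding g3_def using lpow_lpow[OF z] by simp
  also have "\<dots> = lpow G z 1"
  proof -
    have "int n dvd 1 - k * s" using ks(1) by (metis dvd_minus_iff minus_diff_eq)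
    thus ?thesis using lpow_eq_iff[OF z] unfolding n_def by blast
  qed
  finally have "z = lpow G g3 s" using z by simp
  hence tw3: "tw S z g3" using mutual_tw[OF S zS g3S z1 g31] unfolding g3_def by blast
  have "g2 \<noteq> z"
  proof
    assume "g2 = z"
    hence "lpow G z (-1) = lpow G z 1" unfolding g2_def using z by simp
    hence "int n dvd 2" using lpow_eq_iff[OF z] unfolding n_def by simp
    thus False using n8 by (metis zdvd_not_zless zero_less_numeral linorder_not_le order_less_le_trans numeral_less_iff semiring_norm(76) semiring_norm(78) semiring_norm(79) semiring_norm(81) semiring_norm(69))
  qed
  moreover have "g3 \<noteq> z"
  proof
    assume "g3 = z"
    hence "lpow G z k = lpow G z 1" unfolding g3_def using z by simp
    hence "int n dvd 1 - k" using lpow_eq_iff[OF z] unfolding n_def by simp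
    hence "int n dvd k - 1" by (metis dvd_minus_iff minus_diff_eq)
    thus False using ks(2) by simp
  qed
  moreover have "g2 \<noteq> g3"
  proof
    assume "g2 = g3"
    hence "lpow G z (-1) = lpow G z k" unfolding g2_def g3_def by simp
    hence "int n dvd k - (-1)" using lpow_eq_iff[OF z] unfolding n_def by blast
    thus False using ks(3) by simp
  qed
  ultimately show False using TWz tw2 tw3 unfolding TW_def by blast
qed

end

context pal begin

lemma tw_sym: "tw S u v \<Longrightarrow> tw S v u" unfolding tw_def by blast

lemma TL:
  assumes S: "S \<subseteq> carrier G" and S1: "\<And>u. u \<in> carrier G \<Longrightarrow> u \<noteq> \<one> \<Longrightarrow> u \<in> S"
    and aS: "a \<in> S" and bS: "b \<in> S" and cS: "c \<in> S"
    and a1: "a \<noteq> \<one>" and b1: "b \<noteq> \<one>" and c1: "c \<noteq> \<one>"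
    and ta: "tor a" and tb: "tor b" and tc: "tor c"
    and Fab: "F a b" and Fbc: "F b c" and Fac: "F a c"
    and nab: "\<not> tw S a b" and nbc: "\<not> tw S b c" and nac: "\<not> tw S a c"
    and Ta: "TW S a" and Tb: "TW S b" and Tc: "TW S c"
  shows False
proof -
  define le where "le u v \<longleftrightarrow> (\<exists>s. u = lpow G v s)" for u v
  have adj: "le u v \<or> le v u" if "F u v" for u v
    using that unfolding power_adj_pm_def le_def by blast
  have mut: "\<not> (le u v \<and> le v u)" if "u \<in> S" "v \<in> S" "u \<noteq> \<one>" "v \<noteq> \<one>" "\<not> tw S u v" for u v
  proof
    assume "le u v \<and> le v u"
    then obtain i j where "u = lpow G v i" "v = lpow G u j" unfolding le_def by blast
    thus False using mutual_tw[OF S that(1,2,3,4)] that(5) by blast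
  qed
  have trans: "le u w" if H: "v \<in> S" "w \<in> S" "le u v" "le v w" for u v w
  proof -
    obtain i j where "u = lpow G v i" "v = lpow G w j" using H(3,4) unfolding le_def by blast
    hence "u = lpow G w (j*i)" using lpow_lpow H(2) S by auto
    thus ?thesis unfolding le_def by blast
  qed
  have core': False if H: "u \<in> S" "v \<in> S" "w \<in> S" "u \<noteq> \<one>" "w \<noteq> \<one>" "tor w" "TW S w"
      "le u v" "le v w" "\<not> le v u" "\<not> le w v" for u v w
  proof -
    obtain p where p: "u = lpow G v p" using H(8) unfolding le_def by blast
    obtain q where q: "v = lpow G w q" using H(9) unfolding le_def by blast
    show False
      by (rule core[OF S S1 H(3) _ _ H(4,5,6) p q _ _ H(7)])
         (use H S le_def in auto)
  qed
  have nab': "\<not> tw S b a" and nbc': "\<not> tw S c b" and nac': "\<not> tw S c a"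
    using nab nbc nac tw_sym by blast+
  note facts = adj[OF Fab] adj[OF Fbc] adj[OF Fac]
    mut[OF aS bS a1 b1 nab] mut[OF bS cS b1 c1 nbc] mut[OF aS cS a1 c1 nac]
    trans[OF bS cS, of a] trans[OF cS bS, of a] trans[OF aS cS, of b] trans[OF cS aS, of b]
    trans[OF aS bS, of c] trans[OF bS aS, of c]
    core'[OF aS bS cS a1 c1 tc Tc] core'[OF aS cS bS a1 b1 tb Tb]
    core'[OF bS aS cS b1 c1 tc Tc] core'[OF bS cS aS b1 a1 ta Ta]
    core'[OF cS aS bS c1 b1 tb Tb] core'[OF cS bS aS c1 a1 ta Ta]
  show False using facts by blast
qed

end

locale two = G: pal G + H: pal H
  for G :: "('a, 'c) monoid_scheme" and H :: "('b, 'd) monoid_scheme" +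
  fixes SG SH g
  assumes SG: "SG \<subseteq> carrier G" and SG1: "\<And>u. u \<in> carrier G \<Longrightarrow> u \<noteq> \<one>\<^bsub>G\<^esub> \<Longrightarrow> u \<in> SG"
    and SH: "SH \<subseteq> carrier H" and SH1: "\<And>u. u \<in> carrier H \<Longrightarrow> u \<noteq> \<one>\<^bsub>H\<^esub> \<Longrightarrow> u \<in> SH"
    and bij: "bij_betw g SG SH"
    and hom: "\<And>x y. x \<in> SG \<Longrightarrow> y \<in> SG \<Longrightarrow> power_adj_pm G x y \<longleftrightarrow> power_adj_pm H (g x) (g y)"
begin

lemma g_in: "x \<in> SG \<Longrightarrow> g x \<in> SH" using bij bij_betwE by blast
lemma g_inj: "x \<in> SG \<Longrightarrow> y \<in> SG \<Longrightarrow> g x = g y \<longleftrightarrow> x = y"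
  using bij unfolding bij_betw_def inj_on_def by blast
lemma g_surj: "y \<in> SH \<Longrightarrow> \<exists>x\<in>SG. y = g x" using bij unfolding bij_betw_def by blast

lemma all_SH: "(\<forall>w\<in>SH. P w) \<longleftrightarrow> (\<forall>w\<in>SG. P (g w))"
  using g_in g_surj by blast

lemma tw_tr:
  assumes u: "u \<in> SG" and v: "v \<in> SG"
  shows "G.tw SG u v \<longleftrightarrow> H.tw SH (g u) (g v)"
proof -
  have "(\<forall>w\<in>SH. (w = g u \<or> power_adj_pm H (g u) w) \<longleftrightarrow> (w = g v \<or> power_adj_pm H (g v) w))
    \<longleftrightarrow> (\<forall>w\<in>SG. (g w = g u \<or> power_adj_pm H (g u) (g w)) \<longleftrightarrow> (g w = g v \<or> power_adj_pm H (g v) (g w)))"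
    by (rule all_SH)
  also have "\<dots> \<longleftrightarrow> (\<forall>w\<in>SG. (w = u \<or> power_adj_pm G u w) \<longleftrightarrow> (w = v \<or> power_adj_pm G v w))"
    using g_inj hom u v by auto
  finally show ?thesis unfolding G.tw_def H.tw_def using u v g_in by auto
qed

lemma TW_tr:
  assumes u: "u \<in> SG" and T: "H.TW SH (g u)"
  shows "G.TW SG u"
  unfolding G.TW_def
proof (intro allI impI)
  fix v w assume v: "G.tw SG u v" and w: "G.tw SG u w"
  have vS: "v \<in> SG" and wS: "w \<in> SG" using v w unfolding G.tw_def by auto
  have "H.tw SH (g u) (g v)" "H.tw SH (g u) (g w)" using v w tw_tr u vS wS by auto
  hence "g v = g u \<or> g w = g u \<or> g v = g w" using T unfolding H.TW_def by blast
  thus "v = u \<or> w = u \<or> v = w" using g_inj u vS wS by auto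
qed

lemma tor_pres:
  assumes x: "x \<in> SG" and x1: "x \<noteq> \<one>\<^bsub>G\<^esub>" and tx: "G.tor x"
  shows "H.tor (g x)"
proof (rule ccontr)
  assume ny: "\<not> H.tor (g x)"
  define y where "y = g x"
  have yc: "y \<in> carrier H" unfolding y_def using g_in x SH by auto
  have nty: "\<not> H.tor y" using ny unfolding y_def .
  define Y where "Y a = lpow H y a" for a
  have Yc: "Y a \<in> carrier H" for a unfolding Y_def using yc by simp
  have Ynt: "a \<noteq> 0 \<Longrightarrow> \<not> H.tor (Y a)" for a unfolding Y_def using H.ntor_pow[OF yc nty] .
  have IS: "\<And>u. u \<in> carrier H \<Longrightarrow> \<not> H.tor u \<Longrightarrow> u \<in> SH" using SH1 H.ntor_ne_one by blast
  have YS: "a \<noteq> 0 \<Longrightarrow> Y a \<in> SH" for a using IS[OF Yc Ynt] .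
  have Yinj: "Y a = Y b \<longleftrightarrow> a = b" for a b unfolding Y_def using H.lpow_eq_ntor[OF yc nty] by auto
  have YF: "power_adj_pm H (Y a) (Y b)" if Hy: "a > 0" "a dvd b" "a < b" for a b
  proof -
    obtain c where c: "b = a * c" using Hy(2) by blast
    have "Y b = lpow H (Y a) c" unfolding Y_def using c H.lpow_lpow[OF yc] by simp
    moreover have "c \<noteq> 0" using c Hy by auto
    moreover have "Y a \<noteq> Y b" using Yinj Hy by auto
    ultimately show ?thesis unfolding power_adj_pm_def by blast
  qed
  have Ytw: "\<not> H.tw SH (Y a) (Y b)" if "a > 0" "b > 0" "a \<noteq> b" for a b
  proof
    assume "H.tw SH (Y a) (Y b)"
    hence "Y b = Y a \<or> Y b = lpow H (Y a) (-1)"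
      using H.ntor_tw[OF SH IS Yc Ynt] that by auto
    moreover have "lpow H (Y a) (-1) = Y (-a)" unfolding Y_def using H.lpow_lpow[OF yc] by simp
    ultimately show False using Yinj that by auto
  qed
  have YTW: "a \<noteq> 0 \<Longrightarrow> H.TW SH (Y a)" for a using H.ntor_TW[OF SH IS Yc Ynt] .
  define gi where "gi = inv_into SG g"
  have gi: "w \<in> SH \<Longrightarrow> gi w \<in> SG \<and> g (gi w) = w" for w
  proof -
    assume w: "w \<in> SH"
    have "gi w \<in> SG" unfolding gi_def using bij w by (meson bij_betwE bij_betw_inv_into)
    moreover have "g (gi w) = w" unfolding gi_def using bij w
      by (metis bij_betw_imp_surj_on f_inv_into_f)
    ultimately show ?thesis by simp
  qed
  define U where "U a = gi (Y a)" for a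
  have US: "a \<noteq> 0 \<Longrightarrow> U a \<in> SG" for a unfolding U_def using gi YS by blast
  have gU: "a \<noteq> 0 \<Longrightarrow> g (U a) = Y a" for a unfolding U_def using gi YS by blast
  have U1: "U 1 = x"
  proof -
    have "Y 1 = y" unfolding Y_def using yc by simp
    hence "g (U 1) = g x" using gU[of 1] unfolding y_def by simp
    thus ?thesis using g_inj US[of 1] x by simp
  qed
  have Uc: "a \<noteq> 0 \<Longrightarrow> U a \<in> carrier G" for a using US SG by blast
  have Utor: "G.tor (U a)" if "a > 1" "U a \<noteq> \<one>\<^bsub>G\<^esub>" for a
  proof -
    have "power_adj_pm H (Y 1) (Y a)" using YF[of 1 a] that by simp
    hence "power_adj_pm G (U 1) (U a)" using hom[OF US US] gU that by auto
    thus ?thesis using G.adj_tor[OF _ Uc] U1 x SG tx that by auto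
  qed
  have key: False if "0 < a" "a dvd b" "a < b" "b dvd c" "b < c"
       "U a \<noteq> \<one>\<^bsub>G\<^esub>" "U b \<noteq> \<one>\<^bsub>G\<^esub>" "U c \<noteq> \<one>\<^bsub>G\<^esub>" "G.tor (U a)" "G.tor (U b)" "G.tor (U c)" for a b c
  proof -
    have pos: "a \<noteq> 0" "b \<noteq> 0" "c \<noteq> 0" "b > 0" "c > 0" using that by auto
    have ac: "a dvd c" "a < c" using that dvd_trans by auto
    have F3: "power_adj_pm G (U a) (U b)" "power_adj_pm G (U b) (U c)" "power_adj_pm G (U a) (U c)"
      using YF[of a b] YF[of b c] YF[of a c] that ac hom[OF US US] gU pos by auto
    have T3: "\<not> G.tw SG (U a) (U b)" "\<not> G.tw SG (U b) (U c)" "\<not> G.tw SG (U a) (U c)"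
      using Ytw[of a b] Ytw[of b c] Ytw[of a c] that pos tw_tr[OF US US] gU by auto
    have W3: "G.TW SG (U a)" "G.TW SG (U b)" "G.TW SG (U c)"
      using TW_tr[OF US] YTW gU pos by auto
    show False
      by (rule G.TL[OF SG SG1 US US US that(6,7,8,9,10,11) F3 T3 W3]) (use pos in auto)
  qed
  have d: "U 2 \<noteq> U 4" "U 2 \<noteq> U 8" "U 4 \<noteq> U 8"
    using g_inj US gU Yinj by (metis zero_neq_numeral numeral_eq_iff semiring_norm(83,84,87,89))+
  show False
  proof (cases "U 2 = \<one>\<^bsub>G\<^esub>")
    case True
    hence "U 4 \<noteq> \<one>\<^bsub>G\<^esub>" "U 8 \<noteq> \<one>\<^bsub>G\<^esub>" using d by auto
    thus False using key[of 1 4 8] Utor U1 x1 tx by auto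
  next
    case n2: False
    show False
    proof (cases "U 4 = \<one>\<^bsub>G\<^esub>")
      case True
      hence "U 8 \<noteq> \<one>\<^bsub>G\<^esub>" using d by auto
      thus False using key[of 1 2 8] Utor U1 x1 tx n2 by auto
    next
      case False
      thus False using key[of 1 2 4] Utor U1 x1 tx n2 by auto
    qed
  qed
qed

end

context pal begin

lemma E_char:
  assumes "x \<in> carrier G" "y \<in> carrier G"
  shows "power_adj G x y \<longleftrightarrow> x \<noteq> y \<and> (F x y \<or> x = \<one> \<or> y = \<one>)"
proof
  assume a: "power_adj G x y"
  then obtain n where n: "y = lpow G x n \<or> x = lpow G y n" and xy: "x \<noteq> y" unfolding power_adj_def by auto
  show "x \<noteq> y \<and> (F x y \<or> x = \<one> \<or> y = \<one>)"
  proof (cases "n = 0")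
    case True thus ?thesis using n xy by auto
  next
    case False thus ?thesis using n xy unfolding power_adj_pm_def by blast
  qed
next
  assume a: "x \<noteq> y \<and> (F x y \<or> x = \<one> \<or> y = \<one>)"
  show "power_adj G x y"
  proof (cases "F x y")
    case True thus ?thesis unfolding power_adj_pm_def power_adj_def by blast
  next
    case False
    hence "x = \<one> \<or> y = \<one>" using a by blast
    thus ?thesis using a unfolding power_adj_def by (metis lpow_0)
  qed
qed

lemma F_one:
  assumes y: "y \<in> carrier G"
  shows "F \<one> y \<longleftrightarrow> y \<noteq> \<one> \<and> tor y"
proof
  assume "F \<one> y"
  then obtain n where "n \<noteq> 0" "y = lpow G \<one> n \<or> \<one> = lpow G y n" and y1: "\<one> \<noteq> y"
    unfolding power_adj_pm_def by auto
  thus "y \<noteq> \<one> \<and> tor y" unfolding tor_def by auto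
next
  assume "y \<noteq> \<one> \<and> tor y"
  then obtain n where "n \<noteq> 0" "lpow G y n = \<one>" "y \<noteq> \<one>" unfolding tor_def by auto
  thus "F \<one> y" unfolding power_adj_pm_def by auto
qed

lemma N1: "x \<in> carrier G \<Longrightarrow> (x = \<one> \<or> F \<one> x) \<longleftrightarrow> tor x"
  using F_one tor_one by auto

lemma ntor_inv_adj: "x \<in> carrier G \<Longrightarrow> \<not> tor x \<Longrightarrow> F x (lpow G x (-1)) \<and> \<not> tor (lpow G x (-1)) \<and> lpow G x (-1) \<in> carrier G"
  using ntor_adj_pow[of x "-1"] ntor_pow[of x "-1"] by simp

lemma F_irrefl: "\<not> F x x" unfolding power_adj_pm_def by simp
lemma E_irrefl: "\<not> power_adj G x x" unfolding power_adj_def by simp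
lemma E_sym: "power_adj G x y = power_adj G y x" unfolding power_adj_def by auto

end

lemma swap_iso:
  assumes ua: "ua \<in> V" and ub: "ub \<in> V"
    and tw: "\<forall>v\<in>V. (v = ua \<or> R ua v) \<longleftrightarrow> (v = ub \<or> R ub v)"
    and sym: "\<And>x y. R x y = R y x" and irr: "\<And>x. \<not> R x x"
  defines "\<sigma> \<equiv> (\<lambda>v. if v = ua then ub else if v = ub then ua else v)"
  shows "bij_betw \<sigma> V V" and "\<And>x y. x \<in> V \<Longrightarrow> y \<in> V \<Longrightarrow> R x y \<longleftrightarrow> R (\<sigma> x) (\<sigma> y)"
    and "\<sigma> ua = ub"
proof -
  have inv: "\<sigma> (\<sigma> v) = v" for v unfolding \<sigma>_def by auto
  show "bij_betw \<sigma> V V"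
    by (rule bij_betw_byWitness[where f'=\<sigma>]) (auto simp: inv \<sigma>_def ua ub)
  show "\<sigma> ua = ub" unfolding \<sigma>_def by simp
  fix x y assume x: "x \<in> V" and y: "y \<in> V"
  have t0: "R ua v \<longleftrightarrow> R ub v" if "v \<in> V" "v \<noteq> ua" "v \<noteq> ub" for v using tw that by auto
  have s01: "R ua ub = R ub ua" by (rule sym)
  have sx: "R x ua = R ua x" "R x ub = R ub x" "R y ua = R ua y" "R y ub = R ub y" by (rule sym)+
  have i: "\<not> R ua ua" "\<not> R ub ub" by (rule irr)+
  have tx: "x \<noteq> ua \<Longrightarrow> x \<noteq> ub \<Longrightarrow> R ua x = R ub x" using t0[OF x] by blast
  have ty: "y \<noteq> ua \<Longrightarrow> y \<noteq> ub \<Longrightarrow> R ua y = R ub y" using t0[OF y] by blast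
  show "R x y \<longleftrightarrow> R (\<sigma> x) (\<sigma> y)"
    unfolding \<sigma>_def
    by (cases "x = ua"; cases "x = ub"; cases "y = ua"; cases "y = ub"; simp only: if_True if_False;
        metis s01 sx i tx ty)
qed

lemma two_intro:
  assumes "pal G" "pal H" "SG \<subseteq> carrier G" "\<And>u. u \<in> carrier G \<Longrightarrow> u \<noteq> \<one>\<^bsub>G\<^esub> \<Longrightarrow> u \<in> SG"
    "SH \<subseteq> carrier H" "\<And>u. u \<in> carrier H \<Longrightarrow> u \<noteq> \<one>\<^bsub>H\<^esub> \<Longrightarrow> u \<in> SH"
    "bij_betw g SG SH"
    "\<And>x y. x \<in> SG \<Longrightarrow> y \<in> SG \<Longrightarrow> power_adj_pm G x y \<longleftrightarrow> power_adj_pm H (g x) (g y)"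
  shows "two G H SG SH g"
  using assms unfolding two_def two_axioms_def by blast

lemma iso_tor:
  assumes pG: "pal G" and pH: "pal H" and SG: "SG \<subseteq> carrier G"
    and SG1: "\<And>u. u \<in> carrier G \<Longrightarrow> u \<noteq> \<one>\<^bsub>G\<^esub> \<Longrightarrow> u \<in> SG"
    and SH: "SH \<subseteq> carrier H" and SH1: "\<And>u. u \<in> carrier H \<Longrightarrow> u \<noteq> \<one>\<^bsub>H\<^esub> \<Longrightarrow> u \<in> SH"
    and bij: "bij_betw g SG SH"
    and hom: "\<And>x y. x \<in> SG \<Longrightarrow> y \<in> SG \<Longrightarrow> power_adj_pm G x y \<longleftrightarrow> power_adj_pm H (g x) (g y)"
    and x: "x \<in> SG" and x1: "x \<noteq> \<one>\<^bsub>G\<^esub>" and gx1: "g x \<noteq> \<one>\<^bsub>H\<^esub>"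
  shows "pal.tor G x \<longleftrightarrow> pal.tor H (g x)"
proof
  interpret t: two G H SG SH g by (rule two_intro) fact+
  assume "pal.tor G x" thus "pal.tor H (g x)" using t.tor_pres x x1 by blast
next
  define gi where "gi = inv_into SG g"
  have bi: "bij_betw gi SH SG" unfolding gi_def using bij by (rule bij_betw_inv_into)
  have gi1: "u \<in> SH \<Longrightarrow> g (gi u) = u" for u unfolding gi_def using bij
    by (metis bij_betw_imp_surj_on f_inv_into_f)
  have gi2: "gi (g x) = x" unfolding gi_def using bij x by (metis bij_betw_imp_inj_on inv_into_f_f)
  have giS: "u \<in> SH \<Longrightarrow> gi u \<in> SG" for u using bi bij_betwE by blast
  interpret t: two H G SH SG gi
  proof (rule two_intro)
    show "power_adj_pm H x y \<longleftrightarrow> power_adj_pm G (gi x) (gi y)" if "x \<in> SH" "y \<in> SH" for x y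
      using hom[OF giS giS] gi1 that by auto
  qed fact+
  have gxS: "g x \<in> SH" using bij x bij_betwE by blast
  assume "pal.tor H (g x)" thus "pal.tor G x" using t.tor_pres[OF gxS gx1] gi2 by simp
qed

lemma dir1:
  fixes G :: "('a, 'c) monoid_scheme" and H :: "('b, 'd) monoid_scheme"
  assumes pG: "pal G" and pH: "pal H"
    and iso: "graph_iso (carrier G) (power_adj G) (carrier H) (power_adj H)"
  shows "graph_iso (carrier G) (power_adj_pm G) (carrier H) (power_adj_pm H)"
proof -
  interpret G: pal G by fact
  interpret H: pal H by fact
  obtain f where bf: "bij_betw f (carrier G) (carrier H)"
    and hf: "\<And>x y. x \<in> carrier G \<Longrightarrow> y \<in> carrier G \<Longrightarrow> power_adj G x y \<longleftrightarrow> power_adj H (f x) (f y)"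
    using iso unfolding graph_iso_def by blast
  have fc: "x \<in> carrier G \<Longrightarrow> f x \<in> carrier H" for x using bf bij_betwE by blast
  have finj: "x \<in> carrier G \<Longrightarrow> y \<in> carrier G \<Longrightarrow> f x = f y \<longleftrightarrow> x = y" for x y
    using bf unfolding bij_betw_def inj_on_def by blast
  have fsurj: "v \<in> carrier H \<Longrightarrow> \<exists>w\<in>carrier G. v = f w" for v using bf unfolding bij_betw_def by blast
  define a where "a = f \<one>\<^bsub>G\<^esub>"
  have ac: "a \<in> carrier H" unfolding a_def using fc by simp
  have dom: "(v = a \<or> power_adj H a v) \<longleftrightarrow> (v = \<one>\<^bsub>H\<^esub> \<or> power_adj H \<one>\<^bsub>H\<^esub> v)" if v: "v \<in> carrier H" for v
  proof -
    obtain w where w: "w \<in> carrier G" "v = f w" using fsurj v by blast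
    have "v = a \<or> power_adj H a v"
    proof (cases "w = \<one>\<^bsub>G\<^esub>")
      case True thus ?thesis using w unfolding a_def by simp
    next
      case False
      hence "power_adj G \<one>\<^bsub>G\<^esub> w" using G.E_char[OF G.one_c w(1)] by auto
      thus ?thesis using hf[OF G.one_c w(1)] w unfolding a_def by simp
    qed
    moreover have "v = \<one>\<^bsub>H\<^esub> \<or> power_adj H \<one>\<^bsub>H\<^esub> v" using H.E_char[OF H.one_c v] by auto
    ultimately show ?thesis by simp
  qed
  define \<sigma> where "\<sigma> = (\<lambda>v. if v = a then \<one>\<^bsub>H\<^esub> else if v = \<one>\<^bsub>H\<^esub> then a else v)"
  have dom': "\<forall>v\<in>carrier H. (v = a \<or> power_adj H a v) \<longleftrightarrow> (v = \<one>\<^bsub>H\<^esub> \<or> power_adj H \<one>\<^bsub>H\<^esub> v)"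
    using dom by blast
  note sw = swap_iso[where ua=a and V="carrier H" and ub="\<one>\<^bsub>H\<^esub>" and R="power_adj H",
     OF ac H.one_c dom' H.E_sym H.E_irrefl]
  have sw1: "bij_betw \<sigma> (carrier H) (carrier H)" unfolding \<sigma>_def by (rule sw(1))
  have sw3: "\<sigma> a = \<one>\<^bsub>H\<^esub>" unfolding \<sigma>_def by simp
  have sw2: "power_adj H u v \<longleftrightarrow> power_adj H (\<sigma> u) (\<sigma> v)" if "u \<in> carrier H" "v \<in> carrier H" for u v
    unfolding \<sigma>_def using sw(2)[OF that] .
  define h where "h = \<sigma> \<circ> f"
  have bh: "bij_betw h (carrier G) (carrier H)" unfolding h_def using bf sw1 by (rule bij_betw_trans)
  have hh: "power_adj G x y \<longleftrightarrow> power_adj H (h x) (h y)" if "x \<in> carrier G" "y \<in> carrier G" for x y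
  proof -
    have "power_adj H (f x) (f y) \<longleftrightarrow> power_adj H (\<sigma> (f x)) (\<sigma> (f y))"
      using sw2[of "f x" "f y"] fc[OF that(1)] fc[OF that(2)] by blast
    thus ?thesis using hf[OF that] unfolding h_def comp_def by blast
  qed
  have h1: "h \<one>\<^bsub>G\<^esub> = \<one>\<^bsub>H\<^esub>" unfolding h_def comp_def using sw3 unfolding a_def by blast
  have hc: "x \<in> carrier G \<Longrightarrow> h x \<in> carrier H" for x using bh bij_betwE by blast
  have hinj: "x \<in> carrier G \<Longrightarrow> y \<in> carrier G \<Longrightarrow> h x = h y \<longleftrightarrow> x = y" for x y
    using bh unfolding bij_betw_def inj_on_def by blast
  have hne1: "x \<in> carrier G \<Longrightarrow> h x = \<one>\<^bsub>H\<^esub> \<longleftrightarrow> x = \<one>\<^bsub>G\<^esub>" for x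
    using hinj[OF _ G.one_c] h1 by auto
  define SG where "SG = carrier G - {\<one>\<^bsub>G\<^esub>}"
  define SH where "SH = carrier H - {\<one>\<^bsub>H\<^esub>}"
  have bS: "bij_betw h SG SH" unfolding SG_def SH_def
    by (rule bij_betw_DiffI[OF bh]) (use h1 in auto)
  have FE_G: "power_adj_pm G x y \<longleftrightarrow> power_adj G x y" if "x \<in> SG" "y \<in> SG" for x y
    using G.E_char[of x y] that unfolding SG_def power_adj_pm_def by auto
  have FE_H: "power_adj_pm H x y \<longleftrightarrow> power_adj H x y" if "x \<in> SH" "y \<in> SH" for x y
    using H.E_char[of x y] that unfolding SH_def power_adj_pm_def by auto
  have hS: "x \<in> SG \<Longrightarrow> h x \<in> SH" for x using bS bij_betwE by blast
  have homS: "power_adj_pm G x y \<longleftrightarrow> power_adj_pm H (h x) (h y)" if "x \<in> SG" "y \<in> SG" for x y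
    using FE_G[OF that] FE_H[OF hS hS] that hh SG_def by auto
  have tr: "pal.tor G x \<longleftrightarrow> pal.tor H (h x)" if "x \<in> carrier G" "x \<noteq> \<one>\<^bsub>G\<^esub>" for x
    by (rule iso_tor[OF pG pH _ _ _ _ bS homS]) (use that hne1 in \<open>auto simp: SG_def SH_def\<close>)
  have "power_adj_pm G x y \<longleftrightarrow> power_adj_pm H (h x) (h y)" if x: "x \<in> carrier G" and y: "y \<in> carrier G" for x y
  proof (cases "x = \<one>\<^bsub>G\<^esub>")
    case True
    thus ?thesis using G.F_one[OF y] H.F_one[OF hc[OF y]] h1 hne1[OF y] tr[OF y] by auto
  next
    case xn: False
    show ?thesis
    proof (cases "y = \<one>\<^bsub>G\<^esub>")
      case True
      thus ?thesis using G.F_one[OF x] H.F_one[OF hc[OF x]] h1 hne1[OF x] tr[OF x] G.adj_sym H.adj_sym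
        by metis
    next
      case False
      thus ?thesis using homS x y xn unfolding SG_def by auto
    qed
  qed
  thus ?thesis unfolding graph_iso_def using bh by blast
qed


lemma dir2:
  fixes G :: "('a, 'c) monoid_scheme" and H :: "('b, 'd) monoid_scheme"
  assumes pG: "pal G" and pH: "pal H"
    and iso: "graph_iso (carrier G) (power_adj_pm G) (carrier H) (power_adj_pm H)"
  shows "graph_iso (carrier G) (power_adj G) (carrier H) (power_adj H)"
proof -
  interpret G: pal G by fact
  interpret H: pal H by fact
  obtain f where bf: "bij_betw f (carrier G) (carrier H)"
    and hf: "\<And>x y. x \<in> carrier G \<Longrightarrow> y \<in> carrier G \<Longrightarrow> power_adj_pm G x y \<longleftrightarrow> power_adj_pm H (f x) (f y)"
    using iso unfolding graph_iso_def by blast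
  have fc: "x \<in> carrier G \<Longrightarrow> f x \<in> carrier H" for x using bf bij_betwE by blast
  have finj: "x \<in> carrier G \<Longrightarrow> y \<in> carrier G \<Longrightarrow> f x = f y \<longleftrightarrow> x = y" for x y
    using bf unfolding bij_betw_def inj_on_def by blast
  have fsurj: "v \<in> carrier H \<Longrightarrow> \<exists>w\<in>carrier G. v = f w" for v using bf unfolding bij_betw_def by blast
  have it: "G.tor x \<longleftrightarrow> H.tor (f x)" if "x \<in> carrier G" "x \<noteq> \<one>\<^bsub>G\<^esub>" "f x \<noteq> \<one>\<^bsub>H\<^esub>" for x
    by (rule iso_tor[OF pG pH _ _ _ _ bf hf]) (use that in auto)
  define a where "a = f \<one>\<^bsub>G\<^esub>"
  have ac: "a \<in> carrier H" unfolding a_def using fc by simp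
  have ta: "H.tor a"
  proof (rule ccontr)
    assume na: "\<not> H.tor a"
    define a' where "a' = lpow H a (-1)"
    have a': "power_adj_pm H a a'" "\<not> H.tor a'" "a' \<in> carrier H"
      using H.ntor_inv_adj[OF ac na] unfolding a'_def by auto
    obtain w where w: "w \<in> carrier G" "a' = f w" using fsurj a'(3) by blast
    have "power_adj_pm G \<one>\<^bsub>G\<^esub> w" using hf[OF G.one_c w(1)] a'(1) w unfolding a_def by simp
    hence "w \<noteq> \<one>\<^bsub>G\<^esub>" "G.tor w" using G.F_one[OF w(1)] by auto
    moreover have "f w \<noteq> \<one>\<^bsub>H\<^esub>" using a'(2) w H.tor_one by auto
    ultimately have "H.tor a'" using it[OF w(1)] w by simp
    thus False using a'(2) by simp
  qed
  have tr: "G.tor x \<longleftrightarrow> H.tor (f x)" if x: "x \<in> carrier G" for x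
  proof (cases "x = \<one>\<^bsub>G\<^esub>")
    case True thus ?thesis using ta G.tor_one unfolding a_def by simp
  next
    case x1: False
    show ?thesis
    proof (cases "f x = \<one>\<^bsub>H\<^esub>")
      case False thus ?thesis using it x x1 by blast
    next
      case fx1: True
      have "G.tor x"
      proof (rule ccontr)
        assume nx: "\<not> G.tor x"
        define x' where "x' = lpow G x (-1)"
        have x': "power_adj_pm G x x'" "\<not> G.tor x'" "x' \<in> carrier G"
          using G.ntor_inv_adj[OF x nx] unfolding x'_def by auto
        have "power_adj_pm H \<one>\<^bsub>H\<^esub> (f x')" using hf[OF x x'(3)] x'(1) fx1 by simp
        hence "f x' \<noteq> \<one>\<^bsub>H\<^esub>" "H.tor (f x')" using H.F_one[OF fc[OF x'(3)]] by auto
        moreover have "x' \<noteq> \<one>\<^bsub>G\<^esub>" using x'(2) G.tor_one by auto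
        ultimately have "G.tor x'" using it[OF x'(3)] by simp
        thus False using x'(2) by simp
      qed
      thus ?thesis using fx1 H.tor_one by simp
    qed
  qed
  have dom: "\<forall>v\<in>carrier H. (v = a \<or> power_adj_pm H a v) \<longleftrightarrow> (v = \<one>\<^bsub>H\<^esub> \<or> power_adj_pm H \<one>\<^bsub>H\<^esub> v)"
  proof
    fix v assume v: "v \<in> carrier H"
    obtain w where w: "w \<in> carrier G" "v = f w" using fsurj v by blast
    have "(v = a \<or> power_adj_pm H a v) \<longleftrightarrow> (w = \<one>\<^bsub>G\<^esub> \<or> power_adj_pm G \<one>\<^bsub>G\<^esub> w)"
      using w finj[OF w(1) G.one_c] hf[OF G.one_c w(1)] unfolding a_def by auto
    also have "\<dots> \<longleftrightarrow> G.tor w" using G.N1[OF w(1)] .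
    also have "\<dots> \<longleftrightarrow> H.tor v" using tr[OF w(1)] w by simp
    also have "\<dots> \<longleftrightarrow> (v = \<one>\<^bsub>H\<^esub> \<or> power_adj_pm H \<one>\<^bsub>H\<^esub> v)" using H.N1[OF v] by simp
    finally show "(v = a \<or> power_adj_pm H a v) \<longleftrightarrow> (v = \<one>\<^bsub>H\<^esub> \<or> power_adj_pm H \<one>\<^bsub>H\<^esub> v)" .
  qed
  define \<sigma> where "\<sigma> = (\<lambda>v. if v = a then \<one>\<^bsub>H\<^esub> else if v = \<one>\<^bsub>H\<^esub> then a else v)"
  note sw = swap_iso[where ua=a and V="carrier H" and ub="\<one>\<^bsub>H\<^esub>" and R="power_adj_pm H",
     OF ac H.one_c dom H.adj_sym H.F_irrefl]
  have sw1: "bij_betw \<sigma> (carrier H) (carrier H)" unfolding \<sigma>_def by (rule sw(1))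
  have sw3: "\<sigma> a = \<one>\<^bsub>H\<^esub>" unfolding \<sigma>_def by simp
  have sw2: "power_adj_pm H u v \<longleftrightarrow> power_adj_pm H (\<sigma> u) (\<sigma> v)" if "u \<in> carrier H" "v \<in> carrier H" for u v
    unfolding \<sigma>_def using sw(2)[OF that] .
  define h where "h = \<sigma> \<circ> f"
  have bh: "bij_betw h (carrier G) (carrier H)" unfolding h_def using bf sw1 by (rule bij_betw_trans)
  have hh: "power_adj_pm G x y \<longleftrightarrow> power_adj_pm H (h x) (h y)" if "x \<in> carrier G" "y \<in> carrier G" for x y
  proof -
    have "power_adj_pm H (f x) (f y) \<longleftrightarrow> power_adj_pm H (\<sigma> (f x)) (\<sigma> (f y))"
      using sw2[of "f x" "f y"] fc[OF that(1)] fc[OF that(2)] by blast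
    thus ?thesis using hf[OF that] unfolding h_def comp_def by blast
  qed
  have h1: "h \<one>\<^bsub>G\<^esub> = \<one>\<^bsub>H\<^esub>" unfolding h_def comp_def using sw3 unfolding a_def by blast
  have hc: "x \<in> carrier G \<Longrightarrow> h x \<in> carrier H" for x using bh bij_betwE by blast
  have hinj: "x \<in> carrier G \<Longrightarrow> y \<in> carrier G \<Longrightarrow> h x = h y \<longleftrightarrow> x = y" for x y
    using bh unfolding bij_betw_def inj_on_def by blast
  have hne1: "x \<in> carrier G \<Longrightarrow> h x = \<one>\<^bsub>H\<^esub> \<longleftrightarrow> x = \<one>\<^bsub>G\<^esub>" for x
    using hinj[OF _ G.one_c] h1 by auto
  have "power_adj G x y \<longleftrightarrow> power_adj H (h x) (h y)" if x: "x \<in> carrier G" and y: "y \<in> carrier G" for x y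
    using G.E_char[OF x y] H.E_char[OF hc[OF x] hc[OF y]] hh[OF x y] hinj[OF x y] hne1[OF x] hne1[OF y]
    by blast
  thus ?thesis unfolding graph_iso_def using bh by blast
qed

theorem mainTheorem2:
  fixes G :: "'a monoid" and H :: "'b monoid"
  assumes "power_assoc_loop G" and "power_assoc_loop H"
  shows "graph_iso (carrier G) (power_adj G) (carrier H) (power_adj H) \<longleftrightarrow>
         graph_iso (carrier G) (power_adj_pm G) (carrier H) (power_adj_pm H)"
proof -
  have pG: "pal G" and pH: "pal H" using assms by (simp_all add: pal_def)
  show ?thesis using dir1[OF pG pH] dir2[OF pG pH] by blast
qed

end
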